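(* Suppose $c_1\ge-1$, $c_2\ge-1$, $c_3>\bar c_3(c_1,c_2)$. Then any $C^1$ solution $U$ of $(1-x^2)U'+2xU+\frac12U^2=P_c(x)$ in $(-1,1)$ other than $U^+$ and $U^-$ satisfies $U^-<U<U^+$ in $(-1,1)$, $U(-1)=\tau_1(c_1)$ and $U(1)=\tau_2'(c_2)$.
   Context: $P_c(x):=c_1(1-x)+c_2(1+x)+c_3(1-x^2)$; $\bar c_3(c_1,c_2):=-\frac12(\sqrt{1+c_1}+\sqrt{1+c_2})(\sqrt{1+c_1}+\sqrt{1+c_2}+2)$; $\tau_1(c_1):=2-2\sqrt{1+c_1}$, $\tau_2(c_1):=2+2\sqrt{1+c_1}$, $\tau_1'(c_2):=-2-2\sqrt{1+c_2}$, $\tau_2'(c_2):=-2+2\sqrt{1+c_2}$. $U^+$ denotes the solution on $(-1,1)$ which near $x=-1$ is given by a convergent power series $\tau_2(c_1)+\sum_{n\ge1}a_n(1+x)^n$, and $U^-$ the solution on $(-1,1)$ which near $x=1$ is given by a convergent power series $\tau_1'(c_2)+\sum_{n\ge1}b_n(1-x)^n$ (both exist on all of $(-1,1)$ under the hypotheses). $U(\pm1)$ denote one-sided limits. *)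

theory Defs
  imports "HOL-Analysis.Analysis"
begin

definition Pc :: "real \<Rightarrow> real \<Rightarrow> real \<Rightarrow> real \<Rightarrow> real" where
  "Pc c1 c2 c3 x = c1 * (1 - x) + c2 * (1 + x) + c3 * (1 - x^2)"

definition c3bar :: "real \<Rightarrow> real \<Rightarrow> real" where
  "c3bar c1 c2 = - (1/2) * (sqrt (1 + c1) + sqrt (1 + c2)) * (sqrt (1 + c1) + sqrt (1 + c2) + 2)"

definition tau1 :: "real \<Rightarrow> real" where "tau1 c1 = 2 - 2 * sqrt (1 + c1)"
definition tau2 :: "real \<Rightarrow> real" where "tau2 c1 = 2 + 2 * sqrt (1 + c1)"
definition tau1' :: "real \<Rightarrow> real" where "tau1' c2 = -2 - 2 * sqrt (1 + c2)"
definition tau2' :: "real \<Rightarrow> real" where "tau2' c2 = -2 + 2 * sqrt (1 + c2)"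

definition C1_solution :: "real \<Rightarrow> real \<Rightarrow> real \<Rightarrow> (real \<Rightarrow> real) \<Rightarrow> bool" where
  "C1_solution c1 c2 c3 U \<longleftrightarrow>
     (\<exists>U'. continuous_on {-1<..<1} U' \<and>
        (\<forall>x\<in>{-1<..<1}. (U has_real_derivative U' x) (at x) \<and>
           (1 - x^2) * U' x + 2 * x * U x + (1/2) * (U x)^2 = Pc c1 c2 c3 x))"

definition is_Uplus :: "real \<Rightarrow> real \<Rightarrow> real \<Rightarrow> (real \<Rightarrow> real) \<Rightarrow> bool" where
  "is_Uplus c1 c2 c3 U \<longleftrightarrow> C1_solution c1 c2 c3 U \<and>
     (\<exists>\<delta>>0. \<exists>a::nat \<Rightarrow> real. a 0 = tau2 c1 \<and>
        (\<forall>x. -1 < x \<and> x < -1 + \<delta> \<longrightarrow> (\<lambda>n. a n * (1 + x)^n) sums U x))"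

definition is_Uminus :: "real \<Rightarrow> real \<Rightarrow> real \<Rightarrow> (real \<Rightarrow> real) \<Rightarrow> bool" where
  "is_Uminus c1 c2 c3 U \<longleftrightarrow> C1_solution c1 c2 c3 U \<and>
     (\<exists>\<delta>>0. \<exists>b::nat \<Rightarrow> real. b 0 = tau1' c2 \<and>
        (\<forall>x. 1 - \<delta> < x \<and> x < 1 \<longrightarrow> (\<lambda>n. b n * (1 - x)^n) sums U x))"

end

theory Submission
  imports Defs
begin


definition Ff :: "real \<Rightarrow> real \<Rightarrow> real \<Rightarrow> real \<Rightarrow> real \<Rightarrow> real" where
  "Ff c1 c2 c3 x u = (Pc c1 c2 c3 x - 2*x*u - u^2/2) / (1 - x^2)"

lemma sol_deriv:
  assumes "C1_solution c1 c2 c3 U" "-1 < x" "x < 1"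
  shows "(U has_real_derivative Ff c1 c2 c3 x (U x)) (at x)"
proof -
  obtain U' where h: "\<forall>x\<in>{-1<..<1}. (U has_real_derivative U' x) (at x) \<and>
           (1 - x^2) * U' x + 2 * x * U x + (1/2) * (U x)^2 = Pc c1 c2 c3 x"
    using assms(1) unfolding C1_solution_def by blast
  have x: "x \<in> {-1<..<1}" using assms by simp
  have nz: "1 - x^2 \<noteq> 0" using assms by (simp add: abs_square_eq_1)
  have "U' x = Ff c1 c2 c3 x (U x)"
    using h x nz unfolding Ff_def by (simp add: field_simps)
  moreover have "(U has_real_derivative U' x) (at x)" using h x by blast
  ultimately show ?thesis by simp
qed

lemma Ff_diff: "Ff c1 c2 c3 x v - Ff c1 c2 c3 x u = (v - u) * (-(2*x + (u+v)/2)) / (1-x^2)"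
proof -
  have *: "(Pc c1 c2 c3 x - 2*x * v - v^2/2) - (Pc c1 c2 c3 x - 2*x*u - u^2/2) = (v - u) * (-(2*x + (u+v)/2))"
    by (simp add: field_simps power2_eq_square)
  show ?thesis unfolding Ff_def by (simp only: diff_divide_distrib[symmetric] *)
qed

lemma sol_cont:
  assumes "C1_solution c1 c2 c3 U" "-1 < a" "b < 1"
  shows "continuous_on {a..b} U"
proof (rule continuous_at_imp_continuous_on, intro ballI)
  fix x assume "x \<in> {a..b}"
  then show "isCont U x" using sol_deriv[OF assms(1)] assms by (meson DERIV_isCont atLeastAtMost_iff less_le_trans le_less_trans)
qed
lemma powser_lip:
  fixes a :: "nat \<Rightarrow> real" and f :: "real \<Rightarrow> real"
  assumes d: "\<delta> > 0" and s: "\<forall>t. 0 < t \<and> t < \<delta> \<longrightarrow> (\<lambda>n. a n * t^n) sums f t"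
  shows "\<exists>\<eta>>0. \<exists>M\<ge>0. \<forall>t. 0 < t \<and> t < \<eta> \<longrightarrow> \<bar>f t - a 0\<bar> \<le> M * t"
proof -
  define g where "g = (\<lambda>t. \<Sum>n. a n * t^n)"
  have sm: "summable (\<lambda>n. a n * (\<delta>/2)^n)" using s d by (auto simp: sums_iff)
  have "(g has_field_derivative (\<Sum>n. diffs a n * 0^n)) (at 0)"
    unfolding g_def by (rule termdiffs_strong[OF sm]) (use d in auto)
  then obtain D where "(g has_field_derivative D) (at 0)" by blast
  then have "((\<lambda>t. (g t - g 0) / (t - 0)) \<longlongrightarrow> D) (at 0)"
    using DERIV_def by (simp add: has_field_derivative_iff)
  then have "\<forall>\<^sub>F t in at 0. dist ((g t - g 0) / (t - 0)) D < 1"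
    by (rule tendstoD) simp
  then obtain e where e: "e > 0" and he: "\<And>t. t \<noteq> 0 \<Longrightarrow> dist t 0 < e \<Longrightarrow> dist ((g t - g 0) / (t - 0)) D < 1"
    unfolding eventually_at by blast
  have g0: "g 0 = a 0" unfolding g_def by simp
  show ?thesis
  proof (intro exI conjI allI impI)
    show "min e \<delta> > 0" using e d by simp
    show "\<bar>D\<bar> + 1 \<ge> 0" by simp
    fix t assume t: "0 < t \<and> t < min e \<delta>"
    have ft: "f t = g t" using s t unfolding g_def by (auto simp: sums_iff)
    have "\<bar>(g t - a 0) / t - D\<bar> < 1" using he[of t] t g0 by (auto simp: dist_real_def)
    then have "\<bar>(g t - a 0) / t\<bar> \<le> \<bar>D\<bar> + 1" by linarith
    moreover have "g t - a 0 = ((g t - a 0) / t) * t" using t by simp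
    ultimately have "\<bar>g t - a 0\<bar> \<le> (\<bar>D\<bar> + 1) * t" using t
      by (metis abs_mult abs_of_pos mult_right_mono less_imp_le)
    then show "\<bar>f t - a 0\<bar> \<le> (\<bar>D\<bar> + 1) * t" using ft by simp
  qed
qed

lemma bound_on:
  fixes g :: "real \<Rightarrow> real"
  assumes "continuous_on {a..b} g"
  shows "\<exists>L\<ge>0. \<forall>y\<in>{a..b}. \<bar>g y\<bar> \<le> L"
proof -
  have "bounded (g ` {a..b})" using compact_imp_bounded[OF compact_continuous_image[OF assms compact_Icc]] .
  then obtain L where "\<forall>z\<in>g ` {a..b}. norm z \<le> L" unfolding bounded_iff by blast
  then have "\<forall>y\<in>{a..b}. \<bar>g y\<bar> \<le> max L 0" by auto
  then show ?thesis by (intro exI[of _ "max L 0"]) auto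
qed

lemma no_cross:
  assumes U: "C1_solution c1 c2 c3 U" and V: "C1_solution c1 c2 c3 V"
    and x0: "-1 < x0" "x0 < 1" and x: "-1 < x" "x < 1" and eq: "U x0 = V x0"
  shows "U x = V x"
proof -
  define w where "w = (\<lambda>y. V y - U y)"
  define g where "g = (\<lambda>y. - (2*y + (U y + V y)/2) / (1 - y^2))"
  have wd: "(w has_real_derivative g y * w y) (at y)" if "-1 < y" "y < 1" for y
  proof -
    have "(w has_real_derivative Ff c1 c2 c3 y (V y) - Ff c1 c2 c3 y (U y)) (at y)"
      unfolding w_def by (intro DERIV_diff sol_deriv[OF V] sol_deriv[OF U] that)
    moreover have nz: "1 - y^2 \<noteq> 0" using that by (simp add: abs_square_eq_1)
    moreover have "Ff c1 c2 c3 y (V y) - Ff c1 c2 c3 y (U y) = g y * w y"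
      unfolding Ff_diff g_def w_def by (simp add: algebra_simps)
    ultimately show ?thesis by simp
  qed
  define a where "a = min x x0"
  define b where "b = max x x0"
  have ab: "-1 < a" "b < 1" "a \<le> b" using x x0 unfolding a_def b_def by auto
  have "continuous_on {a..b} g"
  proof -
    have "continuous_on {a..b} (\<lambda>y. - (2*y + (U y + V y)/2))"
      using sol_cont[OF U ab(1,2)] sol_cont[OF V ab(1,2)] by (intro continuous_intros) auto
    moreover have "\<forall>y\<in>{a..b}. 1 - y^2 \<noteq> 0" using ab by (auto simp: abs_square_eq_1)
    ultimately show ?thesis unfolding g_def using sol_cont[OF U ab(1,2)] sol_cont[OF V ab(1,2)] by (intro continuous_intros) auto
  qed
  then obtain L where L: "L \<ge> 0" "\<forall>y\<in>{a..b}. \<bar>g y\<bar> \<le> L" using bound_on by blast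
  have w0: "w x0 = 0" using eq unfolding w_def by simp
  show ?thesis
  proof (cases "x0 \<le> x")
    case True
    define \<phi> where "\<phi> = (\<lambda>y. (w y)^2 * exp (-2*L*y))"
    have "\<phi> x \<le> \<phi> x0"
    proof (rule DERIV_nonpos_imp_nonincreasing[OF True])
      fix y assume y: "x0 \<le> y" "y \<le> x"
      have yy: "-1 < y" "y < 1" using y x x0 by auto
      have yab: "y \<in> {a..b}" using y unfolding a_def b_def by auto
      have "(\<phi> has_real_derivative (2 * w y * (g y * w y)) * exp (-2*L*y) + (w y)^2 * (exp (-2*L*y) * (-2*L))) (at y)"
        unfolding \<phi>_def
        by (auto intro!: derivative_eq_intros wd[OF yy] simp: power2_eq_square)
      moreover have "(2 * w y * (g y * w y)) * exp (-2*L*y) + (w y)^2 * (exp (-2*L*y) * (-2*L))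
          = 2 * (w y)^2 * exp (-2*L*y) * (g y - L)"
        by (simp add: algebra_simps power2_eq_square)
      moreover have "2 * (w y)^2 * exp (-2*L*y) * (g y - L) \<le> 0"
        using L(2) yab abs_le_D1 by (intro mult_nonneg_nonpos) fastforce+
      ultimately show "\<exists>D. (\<phi> has_real_derivative D) (at y) \<and> D \<le> 0" by auto
    qed
    then have "(w x)^2 * exp (-2*L*x) \<le> 0" using w0 unfolding \<phi>_def by simp
    then have "(w x)^2 \<le> 0" by (simp add: mult_le_0_iff)
    then show ?thesis unfolding w_def by simp
  next
    case False
    then have le: "x \<le> x0" by simp
    define \<phi> where "\<phi> = (\<lambda>y. (w y)^2 * exp (2*L*y))"
    have "\<phi> x \<le> \<phi> x0"
    proof (rule DERIV_nonneg_imp_nondecreasing[OF le])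
      fix y assume y: "x \<le> y" "y \<le> x0"
      have yy: "-1 < y" "y < 1" using y x x0 by auto
      have yab: "y \<in> {a..b}" using y unfolding a_def b_def by auto
      have "(\<phi> has_real_derivative (2 * w y * (g y * w y)) * exp (2*L*y) + (w y)^2 * (exp (2*L*y) * (2*L))) (at y)"
        unfolding \<phi>_def
        by (auto intro!: derivative_eq_intros wd[OF yy] simp: power2_eq_square)
      moreover have "(2 * w y * (g y * w y)) * exp (2*L*y) + (w y)^2 * (exp (2*L*y) * (2*L))
          = 2 * (w y)^2 * exp (2*L*y) * (g y + L)"
        by (simp add: algebra_simps power2_eq_square)
      moreover have "2 * (w y)^2 * exp (2*L*y) * (g y + L) \<ge> 0"
        using L(2) yab abs_le_D2 by (intro mult_nonneg_nonneg) fastforce+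
      ultimately show "\<exists>D. (\<phi> has_real_derivative D) (at y) \<and> D \<ge> 0" by auto
    qed
    then have "(w x)^2 * exp (2*L*x) \<le> 0" using w0 unfolding \<phi>_def by simp
    then have "(w x)^2 \<le> 0" by (simp add: mult_le_0_iff)
    then show ?thesis unfolding w_def by simp
  qed
qed



definition Gf :: "real \<Rightarrow> real" where "Gf x = (ln (1+x) - ln (1-x)) / 4"
definition Bf :: "real \<Rightarrow> real" where "Bf x = 1 / (2 * (1 - x^2))"
definition Av :: "(real \<Rightarrow> real) \<Rightarrow> real \<Rightarrow> real" where "Av W x = (2*x + W x) / (1 - x^2)"

lemma alg0:
  fixes p q :: real
  assumes "p \<noteq> 0" "q \<noteq> 0" "p + q = 2"
  shows "(1/p - (-1)/q) / 4 = 1 / (2*(p*q))"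
  using assms by (simp add: field_simps)

lemma G_deriv:
  assumes "-1 < y" "y < 1"
  shows "(Gf has_real_derivative Bf y) (at y)"
proof -
  have "(Gf has_real_derivative (1/(1+y) - (-1)/(1-y)) / 4) (at y)"
    unfolding Gf_def using assms
    by (auto intro!: derivative_eq_intros DERIV_ln_divide[THEN DERIV_chain2])
  moreover have "Bf y = 1/(2*((1+y)*(1-y)))" unfolding Bf_def by (simp add: algebra_simps power2_eq_square)
  moreover have "1 + y \<noteq> 0" "1 - y \<noteq> 0" using assms by auto
  ultimately have "(Gf has_real_derivative (1/(1+y) - (-1)/(1-y)) / 4) (at y)" "Bf y = 1/(2*((1+y)*(1-y)))" by auto
  moreover have "(1/(1+y) - (-1)/(1-y)) / 4 = 1/(2*((1+y)*(1-y)))"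
    using alg0[OF \<open>1 + y \<noteq> 0\<close> \<open>1 - y \<noteq> 0\<close>] by simp
  ultimately show ?thesis by (simp add: mult.commute)
qed

lemma Bf_pos: "-1 < y \<Longrightarrow> y < 1 \<Longrightarrow> Bf y > 0"
  unfolding Bf_def by (simp add: abs_square_less_1)

lemma G_ev: "eventually (\<lambda>x. Gf x < Y) (at_right (-1))"
  unfolding eventually_at_right_field
proof (intro exI conjI allI impI)
  show "-1 + min 1 (exp (4*Y)) > -1" by simp
  fix x assume x: "-1 < x" "x < -1 + min 1 (exp (4*Y))"
  have "ln (1+x) < ln (exp (4*Y))" using x by (subst ln_less_cancel_iff) auto
  moreover have "ln (1-x) \<ge> 0" using x by simp
  ultimately show "Gf x < Y" unfolding Gf_def by simp
qed

lemma ev_ex: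
  fixes c :: real
  assumes "eventually P (at_right (-1))" "c > -1"
  shows "\<exists>y. -1 < y \<and> y < c \<and> P y"
proof -
  obtain b where b: "b > -1" "\<forall>y>-1. y < b \<longrightarrow> P y" using assms(1) unfolding eventually_at_right_field by blast
  define y where "y = (-1 + min b c) / 2"
  have "-1 < y" "y < min b c" using b assms(2) unfolding y_def by auto
  then show ?thesis using b by (intro exI[of _ y]) auto
qed

lemma alg1:
  fixes w d y W U :: real
  assumes "W = U + w" "w \<noteq> 0" "d \<noteq> 0"
  shows "- (inverse w * (w * (-(2*y + (U+W)/2)) / d) * inverse w) = (2*y + W)/d * inverse w - 1/(2*d)"
  using assms by (simp add: field_simps)

lemma v_deriv:
  assumes W: "C1_solution c1 c2 c3 W" and U: "C1_solution c1 c2 c3 U"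
    and y: "-1 < y" "y < 1" and ne: "W y \<noteq> U y"
  shows "((\<lambda>x. inverse (W x - U x)) has_real_derivative (Av W y * inverse (W y - U y) - Bf y)) (at y)"
proof -
  have "((\<lambda>x. W x - U x) has_real_derivative (Ff c1 c2 c3 y (W y) - Ff c1 c2 c3 y (U y))) (at y)"
    by (intro DERIV_diff sol_deriv[OF W] sol_deriv[OF U] y)
  then have d: "((\<lambda>x. inverse (W x - U x)) has_real_derivative
      - (inverse (W y - U y) * (Ff c1 c2 c3 y (W y) - Ff c1 c2 c3 y (U y)) * inverse (W y - U y))) (at y)"
    using ne by (intro DERIV_inverse') auto
  have nz: "1 - y^2 \<noteq> 0" using y by (simp add: abs_square_eq_1)
  have w: "W y - U y \<noteq> 0" using ne by simp
  have "- (inverse (W y - U y) * (Ff c1 c2 c3 y (W y) - Ff c1 c2 c3 y (U y)) * inverse (W y - U y))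
      = Av W y * inverse (W y - U y) - Bf y"
    unfolding Ff_diff Av_def Bf_def using alg1[of "W y" "U y" "W y - U y", OF _ w nz] by simp
  with d show ?thesis by simp
qed



lemma refl_sol:
  assumes "C1_solution c1 c2 c3 U"
  shows "C1_solution c2 c1 c3 (\<lambda>x. - U (-x))"
proof -
  obtain U' where c: "continuous_on {-1<..<1} U'" and h: "\<forall>x\<in>{-1<..<1}. (U has_real_derivative U' x) (at x) \<and>
           (1 - x^2) * U' x + 2 * x * U x + (1/2) * (U x)^2 = Pc c1 c2 c3 x"
    using assms unfolding C1_solution_def by blast
  show ?thesis unfolding C1_solution_def
  proof (intro exI[of _ "\<lambda>x. U' (-x)"] conjI ballI)
    show "continuous_on {-1<..<1} (\<lambda>x. U' (- x))"
      by (rule continuous_on_compose2[OF c]) (auto intro!: continuous_intros)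
    fix x :: real assume x: "x \<in> {-1<..<1}"
    then have mx: "-x \<in> {-1<..<1}" by auto
    have "(U has_real_derivative U' (-x)) (at (-x))" using h mx by blast
    then have "((\<lambda>x. U (-x)) has_real_derivative - U' (-x)) (at x)" using DERIV_mirror by blast
    then show "((\<lambda>x. - U (- x)) has_real_derivative U' (- x)) (at x)"
      using DERIV_minus by fastforce
    have "(1 - (-x)^2) * U' (-x) + 2 * (-x) * U (-x) + (1/2) * (U (-x))^2 = Pc c1 c2 c3 (-x)" using h mx by blast
    then show "(1 - x^2) * U' (-x) + 2 * x * (- U (-x)) + (1/2) * (- U (-x))^2 = Pc c2 c1 c3 x"
      unfolding Pc_def by (simp add: algebra_simps)
  qed
qed


lemma prod_deriv:
  assumes "(v has_real_derivative dv) (at y)" "(E has_real_derivative dE) (at y)"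
    "(P has_real_derivative dP) (at y)" "(Q has_real_derivative dQ) (at y)"
  shows "((\<lambda>x. v x * E x * P x - C * Q x) has_real_derivative
           (dv * E y * P y + v y * dE * P y + v y * E y * dP - C * dQ)) (at y)"
proof -
  have "((\<lambda>x. v x * E x * P x - C * Q x) has_real_derivative
      (v y * E y * dP + (v y * dE + dv * E y) * P y - C * dQ)) (at y)"
    by (intro DERIV_diff DERIV_mult' DERIV_cmult assms)
  moreover have "v y * E y * dP + (v y * dE + dv * E y) * P y - C * dQ
     = dv * E y * P y + v y * dE * P y + v y * E y * dP - C * dQ" by (simp add: algebra_simps)
  ultimately show ?thesis by simp
qed

lemma exp_lin_deriv: "((\<lambda>x. exp (k * x)) has_real_derivative exp (k * y) * k) (at y)"
  by (auto intro!: derivative_eq_intros)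

lemma const_deriv: "((\<lambda>x. 1::real) has_real_derivative 0) (at y)"
  by simp

lemma caseD:
  fixes v A :: "real \<Rightarrow> real"
  assumes Dv: "\<forall>y. -1 < y \<and> y < 1 \<longrightarrow> (v has_real_derivative A y * v y - Bf y) (at y)"
    and vneg: "\<forall>y. -1 < y \<and> y < 1 \<longrightarrow> v y < 0"
    and Abd: "\<forall>y. -1 < y \<and> y < bb \<longrightarrow> A y \<ge> - K"
    and K: "K \<ge> 0" and bb: "-1 < bb" "bb \<le> 0"
  shows False
proof -
  define x0 where "x0 = (-1 + bb) / 2"
  have x0: "-1 < x0" "x0 < bb" using bb unfolding x0_def by auto
  define h where "h = (\<lambda>x. v x * exp (K * x) * 1 - (- exp (-K)) * Gf x)"
  have mono: "h x0 \<le> h x" if x: "-1 < x" "x \<le> x0" for x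
  proof (rule DERIV_nonpos_imp_nonincreasing[OF x(2)])
    fix y assume y: "x \<le> y" "y \<le> x0"
    have yy: "-1 < y" "y < 1" "y < bb" using x y x0 bb by auto
    let ?D = "(A y * v y - Bf y) * exp (K * y) * 1 + v y * (exp (K * y) * K) * 1 + v y * exp (K * y) * 0 - (- exp (-K)) * Bf y"
    have "(h has_real_derivative ?D) (at y)"
      unfolding h_def by (rule prod_deriv[OF Dv[rule_format] exp_lin_deriv const_deriv G_deriv]) (use yy in auto)
    moreover have "?D \<le> 0"
    proof -
      have e: "?D = exp (K * y) * ((A y + K) * v y) + Bf y * (exp (-K) - exp (K * y))"
        by (simp add: algebra_simps)
      have "(A y + K) * v y \<le> 0" using Abd yy vneg by (intro mult_nonneg_nonpos) (auto simp: less_imp_le)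
      then have "exp (K * y) * ((A y + K) * v y) \<le> 0" by (simp add: mult_nonneg_nonpos)
      moreover have "K * (-1) \<le> K * y" using K yy by (intro mult_left_mono) auto
      then have "exp (-K) \<le> exp (K * y)" by simp
      then have "Bf y * (exp (-K) - exp (K * y)) \<le> 0" using Bf_pos[of y] yy by (intro mult_nonneg_nonpos) auto
      ultimately show ?thesis using e by linarith
    qed
    ultimately show "\<exists>D. (h has_real_derivative D) (at y) \<and> D \<le> 0" by blast
  qed
  obtain x where x: "-1 < x" "x < x0" "Gf x < exp K * h x0"
    using ev_ex[OF G_ev x0(1)] by blast
  have "h x0 \<le> h x" using mono x by auto
  moreover have "exp (-K) * Gf x < h x0"
  proof -
    have "exp (-K) * Gf x < exp (-K) * (exp K * h x0)" using x(3) by simp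
    also have "\<dots> = h x0" by (simp add: exp_minus field_simps)
    finally show ?thesis .
  qed
  ultimately have "v x * exp (K * x) > 0" unfolding h_def by simp
  moreover have "v x < 0" using vneg x x0 bb by auto
  ultimately show False by (simp add: mult_less_0_iff zero_less_mult_iff)
qed



lemma caseS0:
  fixes v A :: "real \<Rightarrow> real"
  assumes Dv: "\<forall>y. -1 < y \<and> y < 1 \<longrightarrow> (v has_real_derivative A y * v y - Bf y) (at y)"
    and vpos: "\<forall>y. -1 < y \<and> y < 1 \<longrightarrow> v y > 0"
    and Abd: "\<forall>y. -1 < y \<and> y < bb \<longrightarrow> \<bar>A y\<bar> \<le> K"
    and K: "K \<ge> 0" and bb: "-1 < bb" "bb \<le> 0"
  shows "((\<lambda>x. inverse (v x)) \<longlongrightarrow> 0) (at_right (-1))"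
proof -
  define x0 where "x0 = (-1 + bb) / 2"
  have x0: "-1 < x0" "x0 < bb" using bb unfolding x0_def by auto
  define h where "h = (\<lambda>x. v x * exp (-K * x) * 1 - (- 1) * Gf x)"
  have mono: "h x0 \<le> h x" if x: "-1 < x" "x \<le> x0" for x
  proof (rule DERIV_nonpos_imp_nonincreasing[OF x(2)])
    fix y assume y: "x \<le> y" "y \<le> x0"
    have yy: "-1 < y" "y < 1" "y < bb" using x y x0 bb by auto
    let ?D = "(A y * v y - Bf y) * exp (-K * y) * 1 + v y * (exp (-K * y) * -K) * 1 + v y * exp (-K * y) * 0 - (- 1) * Bf y"
    have "(h has_real_derivative ?D) (at y)"
      unfolding h_def by (rule prod_deriv[OF Dv[rule_format] exp_lin_deriv const_deriv G_deriv]) (use yy in auto)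
    moreover have "?D \<le> 0"
    proof -
      have e: "?D = exp (-K * y) * ((A y - K) * v y) + Bf y * (1 - exp (-K * y))"
        by (simp add: algebra_simps)
      have "(A y - K) * v y \<le> 0" using Abd yy abs_le_D1[of "A y" K] vpos
        by (intro mult_nonpos_nonneg) (auto simp: less_imp_le)
      then have "exp (-K * y) * ((A y - K) * v y) \<le> 0" by (simp add: mult_nonneg_nonpos)
      moreover have "y \<le> 0" using yy bb by simp
      then have "0 \<le> -K * y" using K by (simp add: mult_nonneg_nonpos)
      then have "1 \<le> exp (-K * y)" by simp
      then have "Bf y * (1 - exp (-K * y)) \<le> 0" using Bf_pos[of y] yy by (intro mult_nonneg_nonpos) auto
      ultimately show ?thesis using e by linarith
    qed
    ultimately show "\<exists>D. (h has_real_derivative D) (at y) \<and> D \<le> 0" by blast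
  qed
  show ?thesis unfolding tendsto_iff
  proof (intro allI impI)
    fix \<epsilon> :: real assume e: "\<epsilon> > 0"
    obtain b' where b': "b' > -1" "\<forall>y>-1. y < b' \<longrightarrow> Gf y < h x0 - exp K / \<epsilon>"
      using G_ev[of "h x0 - exp K / \<epsilon>"] unfolding eventually_at_right_field by blast
    show "\<forall>\<^sub>F x in at_right (- 1). dist (inverse (v x)) 0 < \<epsilon>"
      unfolding eventually_at_right_field
    proof (intro exI[of _ "min b' x0"] conjI allI impI)
      show "min b' x0 > -1" using b' x0 by simp
      fix x assume x: "-1 < x" "x < min b' x0"
      have "h x0 \<le> h x" using mono x by auto
      moreover have "Gf x < h x0 - exp K / \<epsilon>" using b' x by auto
      ultimately have A1: "v x * exp (-K * x) > exp K / \<epsilon>" unfolding h_def by simp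
      have vx: "v x > 0" using vpos x x0 bb by auto
      have "K * (-x) \<le> K * 1" using K x by (intro mult_left_mono) auto
      then have "exp (-K * x) \<le> exp K" by simp
      then have "v x * exp (-K * x) \<le> v x * exp K" using vx by (intro mult_left_mono) auto
      with A1 have "exp K / \<epsilon> < v x * exp K" by simp
      then have "exp K / \<epsilon> / exp K < v x" by (subst pos_divide_less_eq) auto
      then have "1 / \<epsilon> < v x" by simp
      then have "inverse (v x) < inverse (1 / \<epsilon>)" using e by (intro less_imp_inverse_less) auto
      then show "dist (inverse (v x)) 0 < \<epsilon>" using vx by simp
    qed
  qed
qed

lemma alg4:
  fixes p q v C H :: real
  assumes "p > 0" "q > 0" "H \<le> v * p * q - C * q"
  shows "(H / q + C) / p \<le> v"
proof -
  have "H \<le> (v * p - C) * q" using assms(3) by (simp add: algebra_simps)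
  then have "H / q \<le> v * p - C" by (subst pos_divide_le_eq[OF assms(2)])
  then have "H / q + C \<le> v * p" by simp
  then show ?thesis by (subst pos_divide_le_eq[OF assms(1)]) (simp add: mult.commute)
qed

lemma alg5:
  fixes p q v C H :: real
  assumes "p > 0" "q > 0" "v * p * q - C * q \<le> H"
  shows "v \<le> (H / q + C) / p"
proof -
  have "(v * p - C) * q \<le> H" using assms(3) by (simp add: algebra_simps)
  then have "v * p - C \<le> H / q" by (subst pos_le_divide_eq[OF assms(2)])
  then have "v * p \<le> H / q + C" by simp
  then show ?thesis by (subst pos_le_divide_eq[OF assms(1)]) (simp add: mult.commute)
qed

lemma Psi_deriv:
  assumes "-1 < y" "y < 1"
  shows "((\<lambda>x. exp (- (4 * s) * Gf x)) has_real_derivative exp (- (4 * s) * Gf y) * (- (4 * s) * Bf y)) (at y)"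
  using G_deriv[OF assms] by (auto intro!: derivative_eq_intros)

lemma caseSpos_bounds:
  fixes v A :: "real \<Rightarrow> real"
  assumes Dv: "\<forall>y. -1 < y \<and> y < 1 \<longrightarrow> (v has_real_derivative A y * v y - Bf y) (at y)"
    and vpos: "\<forall>y. -1 < y \<and> y < 1 \<longrightarrow> v y > 0"
    and s: "s > 0"
    and Abd: "\<forall>y. -1 < y \<and> y < bb \<longrightarrow> \<bar>A y - 4 * s*Bf y\<bar> \<le> K"
    and K: "K \<ge> 0" and bb: "-1 < bb" "bb \<le> 0"
    and x: "-1 < x" "x \<le> x0" "x0 < bb"
  shows "((v x0 * exp (-K*x0) * exp (- (4 * s) * Gf x0) - (1/(4 * s) * exp (-K*x0)) * exp (- (4 * s) * Gf x0))
            / exp (- (4 * s) * Gf x) + 1/(4 * s) * exp (-K*x0)) / exp (-K*x) \<le> v x"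
    and "v x \<le> ((v x0 * exp (K*x0) * exp (- (4 * s) * Gf x0) - (1/(4 * s) * exp (K*x0)) * exp (- (4 * s) * Gf x0))
            / exp (- (4 * s) * Gf x) + 1/(4 * s) * exp (K*x0)) / exp (K*x)"
proof -
  define c where "c = 1/(4 * s)"
  have c4: "c * (4 * s) = 1" using s unfolding c_def by simp
  define Psi where "Psi = (\<lambda>x. exp (- (4 * s) * Gf x))"
  define h1 where "h1 = (\<lambda>x. v x * exp (-K * x) * Psi x - (c * exp (-K*x0)) * Psi x)"
  define h2 where "h2 = (\<lambda>x. v x * exp (K * x) * Psi x - (c * exp (K*x0)) * Psi x)"
  have common: "-1 < y" "y < 1" "y < bb" "y \<le> 0" if "x \<le> y" "y \<le> x0" for y
    using x that bb by auto
  have m1: "h1 x0 \<le> h1 x"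
  proof (rule DERIV_nonpos_imp_nonincreasing[OF x(2)])
    fix y assume y: "x \<le> y" "y \<le> x0"
    note yy = common[OF y]
    have Psid: "(Psi has_real_derivative Psi y * (- (4 * s) * Bf y)) (at y)"
      unfolding Psi_def by (rule Psi_deriv) (use yy in auto)
    let ?E = "exp (-K * y)"
    let ?D = "(A y * v y - Bf y) * ?E * Psi y + v y * (?E * -K) * Psi y + v y * ?E * (Psi y * (- (4 * s) * Bf y)) - (c * exp (-K*x0)) * (Psi y * (- (4 * s) * Bf y))"
    have "(h1 has_real_derivative ?D) (at y)"
      unfolding h1_def by (rule prod_deriv[OF Dv[rule_format] exp_lin_deriv Psid Psid]) (use yy in auto)
    moreover have "?D \<le> 0"
    proof -
      have "?D = ?E * Psi y * ((A y - K - 4 * s*Bf y) * v y) + Psi y * Bf y * ((c * (4 * s)) * exp (-K*x0) - ?E)"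
        by (simp add: algebra_simps)
      then have e: "?D = ?E * Psi y * ((A y - K - 4 * s*Bf y) * v y) + Psi y * Bf y * (exp (-K*x0) - ?E)"
        using c4 by simp
      have "(A y - K - 4 * s*Bf y) * v y \<le> 0" using Abd yy abs_le_D1[of "A y - 4 * s*Bf y" K] vpos
        by (intro mult_nonpos_nonneg) (auto simp: less_imp_le)
      then have "?E * Psi y * ((A y - K - 4 * s*Bf y) * v y) \<le> 0"
        unfolding Psi_def by (simp add: mult_nonneg_nonpos)
      moreover have "K * y \<le> K * x0" using K y by (intro mult_left_mono) auto
      then have "exp (-K*x0) \<le> ?E" by simp
      then have "Psi y * Bf y * (exp (-K*x0) - ?E) \<le> 0" using Bf_pos[of y] yy unfolding Psi_def
        by (intro mult_nonneg_nonpos) auto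
      ultimately show ?thesis using e by linarith
    qed
    ultimately show "\<exists>D. (h1 has_real_derivative D) (at y) \<and> D \<le> 0" by blast
  qed
  have m2: "h2 x \<le> h2 x0"
  proof (rule DERIV_nonneg_imp_nondecreasing[OF x(2)])
    fix y assume y: "x \<le> y" "y \<le> x0"
    note yy = common[OF y]
    have Psid: "(Psi has_real_derivative Psi y * (- (4 * s) * Bf y)) (at y)"
      unfolding Psi_def by (rule Psi_deriv) (use yy in auto)
    let ?E = "exp (K * y)"
    let ?D = "(A y * v y - Bf y) * ?E * Psi y + v y * (?E * K) * Psi y + v y * ?E * (Psi y * (- (4 * s) * Bf y)) - (c * exp (K*x0)) * (Psi y * (- (4 * s) * Bf y))"
    have "(h2 has_real_derivative ?D) (at y)"
      unfolding h2_def by (rule prod_deriv[OF Dv[rule_format] exp_lin_deriv Psid Psid]) (use yy in auto)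
    moreover have "?D \<ge> 0"
    proof -
      have "?D = ?E * Psi y * ((A y + K - 4 * s*Bf y) * v y) + Psi y * Bf y * ((c * (4 * s)) * exp (K*x0) - ?E)"
        by (simp add: algebra_simps)
      then have e: "?D = ?E * Psi y * ((A y + K - 4 * s*Bf y) * v y) + Psi y * Bf y * (exp (K*x0) - ?E)"
        using c4 by simp
      have "(A y + K - 4 * s*Bf y) * v y \<ge> 0" using Abd yy abs_le_D2[of "A y - 4 * s*Bf y" K] vpos
        by (intro mult_nonneg_nonneg) (auto simp: less_imp_le)
      then have "?E * Psi y * ((A y + K - 4 * s*Bf y) * v y) \<ge> 0"
        unfolding Psi_def by simp
      moreover have "K * y \<le> K * x0" using K y by (intro mult_left_mono) auto
      then have "?E \<le> exp (K*x0)" by simp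
      then have "Psi y * Bf y * (exp (K*x0) - ?E) \<ge> 0" using Bf_pos[of y] yy unfolding Psi_def
        by (intro mult_nonneg_nonneg) auto
      ultimately show ?thesis using e by linarith
    qed
    ultimately show "\<exists>D. (h2 has_real_derivative D) (at y) \<and> D \<ge> 0" by blast
  qed
  show "((v x0 * exp (-K*x0) * exp (- (4 * s) * Gf x0) - (1/(4 * s) * exp (-K*x0)) * exp (- (4 * s) * Gf x0))
            / exp (- (4 * s) * Gf x) + 1/(4 * s) * exp (-K*x0)) / exp (-K*x) \<le> v x"
    using alg4[of "exp (-K*x)" "Psi x" "h1 x0" "v x" "c * exp (-K*x0)"] m1
    unfolding h1_def Psi_def c_def by simp
  show "v x \<le> ((v x0 * exp (K*x0) * exp (- (4 * s) * Gf x0) - (1/(4 * s) * exp (K*x0)) * exp (- (4 * s) * Gf x0))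
            / exp (- (4 * s) * Gf x) + 1/(4 * s) * exp (K*x0)) / exp (K*x)"
    using alg5[of "exp (K*x)" "Psi x" "v x" "c * exp (K*x0)" "h2 x0"] m2
    unfolding h2_def Psi_def c_def by simp
qed

lemma caseSpos:
  fixes v A :: "real \<Rightarrow> real"
  assumes Dv: "\<forall>y. -1 < y \<and> y < 1 \<longrightarrow> (v has_real_derivative A y * v y - Bf y) (at y)"
    and vpos: "\<forall>y. -1 < y \<and> y < 1 \<longrightarrow> v y > 0"
    and s: "s > 0"
    and Abd: "\<forall>y. -1 < y \<and> y < bb \<longrightarrow> \<bar>A y - 4 * s * Bf y\<bar> \<le> K"
    and K: "K \<ge> 0" and bb: "-1 < bb" "bb \<le> 0"
  shows "((\<lambda>x. inverse (v x)) \<longlongrightarrow> 4 * s) (at_right (-1))"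
proof -
  define c where "c = 1 / (4 * s)"
  have c: "c > 0" using s unfolding c_def by simp
  have vlim: "(v \<longlongrightarrow> c) (at_right (-1))" unfolding tendsto_iff
  proof (intro allI impI)
    fix \<epsilon> :: real assume e: "\<epsilon> > 0"
    define z where "z = 2 * s * \<epsilon>"
    have z: "z > 0" using s e unfolding z_def by simp
    have cz: "c * z = \<epsilon> / 2" using s unfolding c_def z_def by simp
    define t0 where "t0 = min ((bb + 1) / 2) (ln (1 + z) / (K + 1))"
    define x0 where "x0 = -1 + t0"
    have lnz: "ln (1 + z) > 0" using z by simp
    have t0le: "t0 \<le> (bb + 1) / 2" unfolding t0_def by (rule min.cobounded1)
    have t0pos: "t0 > 0" using bb lnz K unfolding t0_def by auto
    have t0: "t0 > 0" "x0 < bb" "-1 < x0" using t0le t0pos bb unfolding x0_def by auto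
    have "K * t0 \<le> (K + 1) * t0" using t0 by simp
    also have "\<dots> \<le> (K + 1) * (ln (1 + z) / (K + 1))" using K unfolding t0_def by (intro mult_left_mono) auto
    also have "\<dots> = ln (1 + z)" using K by simp
    finally have "K * t0 \<le> ln (1 + z)" .
    then have ek: "exp (K * t0) \<le> 1 + z" using z by (metis exp_le_cancel_iff exp_ln add_pos_pos zero_less_one)
    define H1 where "H1 = v x0 * exp (-K*x0) * exp (- (4 * s) * Gf x0) - (1/(4 * s) * exp (-K*x0)) * exp (- (4 * s) * Gf x0)"
    define H2 where "H2 = v x0 * exp (K*x0) * exp (- (4 * s) * Gf x0) - (1/(4 * s) * exp (K*x0)) * exp (- (4 * s) * Gf x0)"
    define S where "S = \<bar>H1\<bar> + \<bar>H2\<bar> + 1"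
    have S: "S > 0" "\<bar>H1\<bar> \<le> S" "\<bar>H2\<bar> \<le> S" unfolding S_def by auto
    define \<eta> where "\<eta> = \<epsilon> / (2 * S * exp K)"
    have \<eta>: "\<eta> > 0" using e S unfolding \<eta>_def by simp
    have S\<eta>: "S * \<eta> * exp K = \<epsilon> / 2" using S unfolding \<eta>_def by simp
    obtain b' where b': "b' > -1" "\<forall>y>-1. y < b' \<longrightarrow> Gf y < ln \<eta> / (4 * s)"
      using G_ev[of "ln \<eta> / (4 * s)"] unfolding eventually_at_right_field by blast
    show "\<forall>\<^sub>F x in at_right (- 1). dist (v x) c < \<epsilon>"
      unfolding eventually_at_right_field
    proof (intro exI[of _ "min b' x0"] conjI allI impI)
      show "min b' x0 > -1" using b' t0 by simp
      fix x assume x: "-1 < x" "x < min b' x0"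
      have xle: "x \<le> x0" "x \<le> 0" using x t0 bb by auto
      note bnds = caseSpos_bounds[OF Dv vpos s Abd K bb x(1) xle(1) t0(2)]
      define q where "q = exp (- (4 * s) * Gf x)"
      have q: "q > 0" unfolding q_def by simp
      have "Gf x < ln \<eta> / (4 * s)" using b' x by auto
      then have "4 * s * Gf x < ln \<eta>" using s by (simp add: less_divide_eq mult.commute)
      then have "exp (4 * s * Gf x) < \<eta>" using \<eta> by (metis exp_less_cancel_iff exp_ln)
      moreover have "1 / q = exp (4 * s * Gf x)" unfolding q_def by (simp add: exp_minus field_simps)
      ultimately have iq: "1 / q < \<eta>" "1 / q > 0" using q by auto
      have Siq: "S * (1 / q) * exp K < \<epsilon> / 2"
        using S\<eta> iq S(1) by (metis mult_strict_left_mono mult_strict_right_mono exp_gt_zero)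
      have eK1: "exp K \<ge> 1" using K by simp
      have low: "(H1 / q + c * exp (-K*x0)) / exp (-K*x) \<le> v x"
        using bnds(1) unfolding H1_def q_def c_def .
      have low_eq: "(H1 / q + c * exp (-K*x0)) / exp (-K*x) = H1 * (1 / q) * exp (K * x) + c * exp (K * (x - x0))"
        by (simp add: exp_minus field_simps mult_exp_exp)
      have ex1: "exp (K * x) \<le> 1" "exp (K * x) > 0" using K xle by (auto simp: mult_nonneg_nonpos)
      have "\<bar>H1 * (1 / q) * exp (K * x)\<bar> = (\<bar>H1\<bar> * (1 / q)) * exp (K * x)"
        using ex1 iq by (simp add: abs_mult)
      also have "\<dots> \<le> (\<bar>H1\<bar> * (1 / q)) * 1" using ex1 iq by (intro mult_left_mono) auto
      also have "\<dots> \<le> S * (1 / q)" using S iq by (simp add: divide_right_mono)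
      also have "\<dots> \<le> S * (1 / q) * exp K" using mult_left_mono[OF eK1, of "S * (1 / q)"] S iq by simp
      finally have l1: "H1 * (1 / q) * exp (K * x) > - (\<epsilon> / 2)" using Siq by linarith
      have "K * (- t0) \<le> K * (x - x0)" using K x unfolding x0_def by (intro mult_left_mono) auto
      then have "exp (- (K * t0)) \<le> exp (K * (x - x0))" by simp
      moreover have "exp (- (K * t0)) \<ge> 1 - z"
      proof -
        have "(1 - z) * exp (K * t0) \<le> 1"
        proof (cases "z \<le> 1")
          case True
          then have "(1 - z) * exp (K * t0) \<le> (1 - z) * (1 + z)" using ek by (intro mult_left_mono) auto
          also have "\<dots> \<le> 1" by (simp add: algebra_simps)
          finally show ?thesis .
        next
          case False
          then have "(1 - z) * exp (K * t0) \<le> 0" by (intro mult_nonpos_nonneg) auto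
          then show ?thesis by simp
        qed
        then show ?thesis by (simp add: exp_minus divide_simps mult.commute)
      qed
      ultimately have "1 - z \<le> exp (K * (x - x0))" by linarith
      then have "c * exp (K * (x - x0)) \<ge> c * (1 - z)" using c by (intro mult_left_mono) auto
      then have l2: "c * exp (K * (x - x0)) \<ge> c - \<epsilon> / 2" using cz by (simp add: algebra_simps)
      have lower: "v x > c - \<epsilon>" using low low_eq l1 l2 by linarith
      have up: "v x \<le> (H2 / q + c * exp (K*x0)) / exp (K*x)"
        using bnds(2) unfolding H2_def q_def c_def .
      have up_eq: "(H2 / q + c * exp (K*x0)) / exp (K*x) = H2 * (1 / q) * exp (- (K * x)) + c * exp (K * (x0 - x))"
        by (simp add: exp_minus field_simps mult_exp_exp)
      have "K * (- x) \<le> K * 1" using K x by (intro mult_left_mono) auto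
      then have ex2: "exp (- (K * x)) \<le> exp K" by simp
      have "H2 * (1 / q) * exp (- (K * x)) \<le> \<bar>H2\<bar> * (1 / q) * exp (- (K * x))"
        using iq by (intro mult_right_mono) auto
      also have "\<dots> \<le> S * (1 / q) * exp K"
        using S iq ex2 by (intro mult_mono) auto
      finally have u1: "H2 * (1 / q) * exp (- (K * x)) < \<epsilon> / 2" using Siq by linarith
      have "K * (x0 - x) \<le> K * t0" using K x unfolding x0_def by (intro mult_left_mono) auto
      then have "exp (K * (x0 - x)) \<le> 1 + z" using ek by (meson exp_le_cancel_iff order_trans)
      then have "c * exp (K * (x0 - x)) \<le> c * (1 + z)" using c by (intro mult_left_mono) auto
      then have u2: "c * exp (K * (x0 - x)) \<le> c + \<epsilon> / 2" using cz by (simp add: algebra_simps)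
      have upper: "v x < c + \<epsilon>" using up up_eq u1 u2 by linarith
      show "dist (v x) c < \<epsilon>" using lower upper by (simp add: dist_real_def abs_less_iff)
    qed
  qed
  have "((\<lambda>x. inverse (v x)) \<longlongrightarrow> inverse c) (at_right (-1))"
    using c by (intro tendsto_inverse vlim) auto
  then show ?thesis using s unfolding c_def by simp
qed

lemma alg6:
  fixes D y u s :: real
  assumes "D \<noteq> 0"
  shows "(2*y + u) / D - 4 * s * (1 / (2 * D)) = (u - (2 + 2 * s) + 2 * (1 + y)) / D"
  using assms by (simp add: field_simps)

lemma alg7:
  fixes p q N K :: real
  assumes "p > 0" "q \<ge> 1" "\<bar>N\<bar> \<le> K * p" "K \<ge> 0"
  shows "\<bar>N / (p * q)\<bar> \<le> K"
proof -
  have pq: "p * q > 0" using assms by simp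
  have "K * p \<le> K * p * q" using assms mult_left_mono[OF assms(2), of "K * p"] by simp
  then have "\<bar>N\<bar> \<le> K * (p * q)" using assms(3) by (simp add: mult.assoc)
  then show ?thesis using pq by (simp add: abs_divide pos_divide_le_eq)
qed

lemma core:
  assumes c1: "c1 \<ge> -1" and Up: "C1_solution c1 c2 c3 Up" and d: "\<delta> > 0" and a0: "a 0 = tau2 c1"
    and ser: "\<forall>x. -1 < x \<and> x < -1 + \<delta> \<longrightarrow> (\<lambda>n. a n * (1 + x)^n) sums Up x"
    and U: "C1_solution c1 c2 c3 U" and ne: "\<exists>x\<in>{-1<..<1}. U x \<noteq> Up x"
  shows "(\<forall>x\<in>{-1<..<1}. U x < Up x) \<and> (U \<longlongrightarrow> tau1 c1) (at_right (-1))"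
proof -
  define s where "s = sqrt (1 + c1)"
  have s0: "s \<ge> 0" unfolding s_def using c1 by simp
  have t2: "tau2 c1 = 2 + 2 * s" unfolding tau2_def s_def by simp
  have t1: "tau1 c1 = 2 - 2 * s" unfolding tau1_def s_def by simp
  have "\<exists>\<eta>>0. \<exists>M\<ge>0. \<forall>t. 0 < t \<and> t < \<eta> \<longrightarrow> \<bar>Up (t - 1) - a 0\<bar> \<le> M * t"
  proof (rule powser_lip[OF d], intro allI impI)
    fix t :: real assume "0 < t \<and> t < \<delta>"
    then have "(\<lambda>n. a n * (1 + (t - 1))^n) sums Up (t - 1)" using ser[rule_format, of "t - 1"] by auto
    then show "(\<lambda>n. a n * t^n) sums Up (t - 1)" by simp
  qed
  then obtain \<eta> M where \<eta>: "\<eta> > 0" "M \<ge> 0" and hM: "\<forall>t. 0 < t \<and> t < \<eta> \<longrightarrow> \<bar>Up (t - 1) - a 0\<bar> \<le> M * t"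
    by blast
  define bb where "bb = -1 + min \<eta> 1"
  have bb: "-1 < bb" "bb \<le> 0" using \<eta> unfolding bb_def by auto
  have Mb: "\<bar>Up x - (2 + 2 * s)\<bar> \<le> M * (1 + x)" if "-1 < x" "x < bb" for x
  proof -
    have "0 < 1 + x \<and> 1 + x < \<eta>" using that unfolding bb_def by auto
    then have "\<bar>Up ((1 + x) - 1) - a 0\<bar> \<le> M * (1 + x)" using hM by blast
    then show ?thesis using a0 t2 by simp
  qed
  define K where "K = M + 2"
  have K: "K \<ge> 0" using \<eta> unfolding K_def by simp
  have Abd: "\<forall>y. -1 < y \<and> y < bb \<longrightarrow> \<bar>Av Up y - 4 * s * Bf y\<bar> \<le> K"
  proof (intro allI impI)
    fix y assume y: "-1 < y \<and> y < bb"
    have nz: "1 - y^2 \<noteq> 0" using y bb by (simp add: abs_square_eq_1)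
    have fac: "1 - y^2 = (1 + y) * (1 - y)" by (simp add: algebra_simps power2_eq_square)
    have e: "Av Up y - 4 * s * Bf y = (Up y - (2 + 2 * s) + 2 * (1 + y)) / ((1 + y) * (1 - y))"
      using nz unfolding Av_def Bf_def fac by (intro alg6) simp
    have "\<bar>Up y - (2 + 2 * s) + 2 * (1 + y)\<bar> \<le> \<bar>Up y - (2 + 2 * s)\<bar> + 2 * (1 + y)" using y abs_triangle_ineq[of "Up y - (2 + 2 * s)" "2 * (1 + y)"] by simp
    also have "\<dots> \<le> K * (1 + y)" using Mb[of y] y unfolding K_def by (simp add: algebra_simps)
    finally have "\<bar>Up y - (2 + 2 * s) + 2 * (1 + y)\<bar> \<le> K * (1 + y)" .
    then show "\<bar>Av Up y - 4 * s * Bf y\<bar> \<le> K" unfolding e using y bb K by (intro alg7) auto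
  qed
  have Uplim: "(Up \<longlongrightarrow> 2 + 2 * s) (at_right (-1))"
  proof -
    have "((\<lambda>x. Up x - (2 + 2 * s)) \<longlongrightarrow> 0) (at_right (-1))"
    proof (rule Lim_null_comparison)
      show "\<forall>\<^sub>F x in at_right (-1). norm (Up x - (2 + 2 * s)) \<le> M * (1 + x)"
        unfolding eventually_at_right_field using bb Mb by (intro exI[of _ bb]) auto
      have "((\<lambda>x. M * (1 + x)) \<longlongrightarrow> M * (1 + (-1))) (at_right (-1))"
        by (intro tendsto_intros)
      then show "((\<lambda>x. M * (1 + x)) \<longlongrightarrow> 0) (at_right (-1))" by simp
    qed
    then show ?thesis by (simp add: LIM_zero_iff)
  qed
  have neq: "U y \<noteq> Up y" if "-1 < y" "y < 1" for y
  proof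
    assume "U y = Up y"
    obtain x where x: "x \<in> {-1<..<1}" "U x \<noteq> Up x" using ne by blast
    have "U x = Up x" by (rule no_cross[OF U Up that]) (use x \<open>U y = Up y\<close> in auto)
    with x show False by simp
  qed
  have sign: "(\<forall>y. -1 < y \<and> y < 1 \<longrightarrow> U y < Up y) \<or> (\<forall>y. -1 < y \<and> y < 1 \<longrightarrow> Up y < U y)"
  proof (rule ccontr)
    assume "\<not> ?thesis"
    then obtain p q where p: "-1 < p" "p < 1" "\<not> U p < Up p" and q: "-1 < q" "q < 1" "\<not> Up q < U q" by blast
    have p': "Up p - U p < 0" using p neq[of p] by auto
    have q': "Up q - U q > 0" using q neq[of q] by auto
    have cont: "continuous_on {min p q..max p q} (\<lambda>x. Up x - U x)"
      using sol_cont[OF Up, of "min p q" "max p q"] sol_cont[OF U, of "min p q" "max p q"] p q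
      by (intro continuous_intros) auto
    obtain z where z: "min p q \<le> z" "z \<le> max p q" "Up z - U z = 0"
    proof (cases "p \<le> q")
      case True
      then show ?thesis using IVT'[of "\<lambda>x. Up x - U x" p 0 q] p' q' cont that by auto
    next
      case False
      then show ?thesis using IVT2'[of "\<lambda>x. Up x - U x" p 0 q] p' q' cont that by auto
    qed
    moreover have "-1 < min p q" "max p q < 1" using p q by auto
    ultimately have "-1 < z" "z < 1" "Up z - U z = 0" by linarith+
    then show False using neq[of z] by auto
  qed
  define v where "v = (\<lambda>x. inverse (Up x - U x))"
  have Dv: "\<forall>y. -1 < y \<and> y < 1 \<longrightarrow> (v has_real_derivative Av Up y * v y - Bf y) (at y)"
    unfolding v_def using v_deriv[OF Up U] neq by (metis)
  have lt: "\<forall>y. -1 < y \<and> y < 1 \<longrightarrow> U y < Up y"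
  proof (rule ccontr)
    assume "\<not> ?thesis"
    then have gt: "\<forall>y. -1 < y \<and> y < 1 \<longrightarrow> Up y < U y" using sign by blast
    have vneg: "\<forall>y. -1 < y \<and> y < 1 \<longrightarrow> v y < 0" unfolding v_def using gt by auto
    have AbdD: "\<forall>y. -1 < y \<and> y < bb \<longrightarrow> Av Up y \<ge> - K"
    proof (intro allI impI)
      fix y assume y: "-1 < y \<and> y < bb"
      have "4 * s * Bf y \<ge> 0" using Bf_pos[of y] s0 y bb by simp
      then show "Av Up y \<ge> - K" using Abd y abs_le_D2[of "Av Up y - 4 * s * Bf y" K] by force
    qed
    show False by (rule caseD[OF Dv vneg AbdD K bb])
  qed
  have vpos: "\<forall>y. -1 < y \<and> y < 1 \<longrightarrow> v y > 0" unfolding v_def using lt by auto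
  have wlim: "((\<lambda>x. inverse (v x)) \<longlongrightarrow> 4 * s) (at_right (-1))"
  proof (cases "s = 0")
    case True
    have "\<forall>y. -1 < y \<and> y < bb \<longrightarrow> \<bar>Av Up y\<bar> \<le> K" using Abd True by simp
    from caseS0[OF Dv vpos this K bb] True show ?thesis by simp
  next
    case False
    then have "s > 0" using s0 by simp
    from caseSpos[OF Dv vpos this Abd K bb] show ?thesis .
  qed
  have "((\<lambda>x. Up x - inverse (v x)) \<longlongrightarrow> (2 + 2 * s) - 4 * s) (at_right (-1))"
    by (intro tendsto_diff Uplim wlim)
  moreover have "(\<lambda>x. Up x - inverse (v x)) = U" unfolding v_def by auto
  ultimately have "(U \<longlongrightarrow> (2 + 2 * s) - 4 * s) (at_right (-1))" by simp
  moreover have "(2 + 2 * s) - 4 * s = tau1 c1" using t1 by simp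
  ultimately have "(U \<longlongrightarrow> tau1 c1) (at_right (-1))" by simp
  then show ?thesis using lt by auto
qed


theorem lemma2p8:
  fixes c1 c2 c3 :: real and Up Um U :: "real \<Rightarrow> real"
  assumes "c1 \<ge> -1" and "c2 \<ge> -1" and "c3 > c3bar c1 c2"
    and "is_Uplus c1 c2 c3 Up" and "is_Uminus c1 c2 c3 Um"
    and "C1_solution c1 c2 c3 U"
    and "\<exists>x\<in>{-1<..<1}. U x \<noteq> Up x"
    and "\<exists>x\<in>{-1<..<1}. U x \<noteq> Um x"
  shows "(\<forall>x\<in>{-1<..<1}. Um x < U x \<and> U x < Up x)
    \<and> (U \<longlongrightarrow> tau1 c1) (at_right (-1))
    \<and> (U \<longlongrightarrow> tau2' c2) (at_left 1)"
proof -
  obtain \<delta> a where Up: "C1_solution c1 c2 c3 Up" and d: "\<delta> > 0" and a0: "a 0 = tau2 c1"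
    and ser: "\<forall>x. -1 < x \<and> x < -1 + \<delta> \<longrightarrow> (\<lambda>n. a n * (1 + x)^n) sums Up x"
    using assms(4) unfolding is_Uplus_def by blast
  have r1: "(\<forall>x\<in>{-1<..<1}. U x < Up x) \<and> (U \<longlongrightarrow> tau1 c1) (at_right (-1))"
    by (rule core[OF assms(1) Up d a0 ser assms(6,7)])
  obtain \<delta>' b where Um: "C1_solution c1 c2 c3 Um" and d': "\<delta>' > 0" and b0: "b 0 = tau1' c2"
    and serb: "\<forall>x. 1 - \<delta>' < x \<and> x < 1 \<longrightarrow> (\<lambda>n. b n * (1 - x)^n) sums Um x"
    using assms(5) unfolding is_Uminus_def by blast
  have Um': "C1_solution c2 c1 c3 (\<lambda>x. - Um (-x))" by (rule refl_sol[OF Um])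
  have U': "C1_solution c2 c1 c3 (\<lambda>x. - U (-x))" by (rule refl_sol[OF assms(6)])
  have b0': "(\<lambda>n. - b n) 0 = tau2 c2" using b0 unfolding tau1'_def tau2_def by simp
  have serb': "\<forall>x. -1 < x \<and> x < -1 + \<delta>' \<longrightarrow> (\<lambda>n. (- b n) * (1 + x)^n) sums (- Um (-x))"
  proof (intro allI impI)
    fix x :: real assume "-1 < x \<and> x < -1 + \<delta>'"
    then have "(\<lambda>n. b n * (1 - (-x))^n) sums Um (-x)" using serb[rule_format, of "-x"] by auto
    then show "(\<lambda>n. (- b n) * (1 + x)^n) sums (- Um (-x))" using sums_minus by fastforce
  qed
  have ne': "\<exists>x\<in>{-1<..<1}. - U (-x) \<noteq> - Um (-x)"
  proof -
    obtain x where "x \<in> {-1<..<1}" "U x \<noteq> Um x" using assms(8) by blast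
    then show ?thesis by (intro bexI[of _ "-x"]) auto
  qed
  have r2: "(\<forall>x\<in>{-1<..<1}. - U (-x) < - Um (-x)) \<and> ((\<lambda>x. - U (-x)) \<longlongrightarrow> tau1 c2) (at_right (-1))"
    by (rule core[OF assms(2) Um' d' b0' serb' U' ne'])
  have lt: "\<forall>x\<in>{-1<..<1}. Um x < U x"
  proof
    fix x :: real assume "x \<in> {-1<..<1}"
    then have "-x \<in> {-1<..<1}" by auto
    then show "Um x < U x" using r2 by fastforce
  qed
  have "((\<lambda>x. - (- U (-x))) \<longlongrightarrow> - tau1 c2) (at_right (-1))"
    using r2 by (intro tendsto_minus) auto
  then have "((\<lambda>x. U (-x)) \<longlongrightarrow> tau2' c2) (at_right (- 1))"
    unfolding tau1_def tau2'_def by simp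
  then have "(U \<longlongrightarrow> tau2' c2) (at_left 1)"
    unfolding filterlim_at_left_to_right[of U _ 1] by simp
  then show ?thesis using r1 lt by blast
qed


end
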